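(* Let $r\ge 1$, $N\ge 1$ and $n\ge 1$ be integers. Then $$B_{N,n}^{(r)}=n!\sum_{k=1}^{n}(-1)^k\sum_{\substack{e_1+\cdots+e_k=n\\ e_1,\dots,e_k\ge 1}}M_r(e_1)\cdots M_r(e_k),$$ where for an integer $e\ge 0$, $$M_r(e)=\sum_{\substack{i_1+\cdots+i_r=e\\ i_1,\dots,i_r\ge 0}}\frac{(N!)^r}{(N+i_1)!\cdots(N+i_r)!}.$$
   Context: For positive integers $N$ and $r$, the higher order hypergeometric Bernoulli numbers $B^{(r)}_{N,n}$ ($n\ge0$) are defined by $$\left(\frac{x^N/N!}{e^x-\sum_{n=0}^{N-1}x^n/n!}\right)^r=\sum_{n=0}^\infty B_{N,n}^{(r)}\frac{x^n}{n!}.$$ *)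

theory Defs
  imports "HOL-Computational_Algebra.Formal_Power_Series" "HOL-Library.FuncSet"
begin

definition hyp_bernoulli_gf :: "nat \<Rightarrow> nat \<Rightarrow> real fps" where
  "hyp_bernoulli_gf N r =
     (fps_const (1 / fact N) * fps_X ^ N /
       (fps_exp 1 - Abs_fps (\<lambda>n. if n < N then 1 / fact n else 0))) ^ r"

definition hyp_bernoulli :: "nat \<Rightarrow> nat \<Rightarrow> nat \<Rightarrow> real" where
  "hyp_bernoulli N r n = fact n * fps_nth (hyp_bernoulli_gf N r) n"

definition M_coeff :: "nat \<Rightarrow> nat \<Rightarrow> nat \<Rightarrow> real" where
  "M_coeff N r e =
     (\<Sum>i\<in>{i \<in> {..<r} \<rightarrow>\<^sub>E {..e}. (\<Sum>j<r. i j) = e}.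
        (fact N) ^ r / (\<Prod>j<r. fact (N + i j)))"

end

theory Submission
  imports Defs
begin
unbundle fps_syntax

definition SS :: "nat \<Rightarrow> nat \<Rightarrow> (nat \<Rightarrow> nat) set" where
  "SS r e = {i \<in> {..<r} \<rightarrow>\<^sub>E {..e}. (\<Sum>j<r. i j) = e}"

lemma SS_finite: "finite (SS r e)"
  unfolding SS_def by (rule finite_subset[of _ "{..<r} \<rightarrow>\<^sub>E {..e}"]) (auto intro: finite_PiE)

lemma SS_bij:
  "bij_betw (\<lambda>(a, i). i(r := e - a)) (SIGMA a:{0..e}. SS r a) (SS (Suc r) e)"
proof (rule bij_betw_byWitness[where f'="\<lambda>x. (e - x r, x(r := undefined))"])
  show "\<forall>p\<in>(SIGMA a:{0..e}. SS r a). (\<lambda>x. (e - x r, x(r := undefined))) ((\<lambda>(a, i). i(r := e - a)) p) = p"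
  proof
    fix p assume p: "p \<in> (SIGMA a:{0..e}. SS r a)"
    obtain a i where pa: "p = (a, i)" by force
    with p have a: "a \<le> e" and i: "i \<in> {..<r} \<rightarrow>\<^sub>E {..a}" by (auto simp: SS_def)
    have "i r = undefined" using i by (auto simp: PiE_def extensional_def)
    hence "i(r := undefined) = i" by auto
    thus "(\<lambda>x. (e - x r, x(r := undefined))) ((\<lambda>(a, i). i(r := e - a)) p) = p"
      using a pa by simp
  qed
  show "\<forall>x\<in>SS (Suc r) e. (\<lambda>(a, i). i(r := e - a)) (e - x r, x(r := undefined)) = x"
  proof
    fix x assume x: "x \<in> SS (Suc r) e"
    hence "x r \<le> e" by (auto simp: SS_def)
    thus "(\<lambda>(a, i). i(r := e - a)) (e - x r, x(r := undefined)) = x" by auto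
  qed
  show "(\<lambda>(a, i). i(r := e - a)) ` (SIGMA a:{0..e}. SS r a) \<subseteq> SS (Suc r) e"
  proof clarify
    fix a i assume a: "a \<in> {0..e}" and i: "i \<in> SS r a"
    hence ip: "i \<in> {..<r} \<rightarrow>\<^sub>E {..a}" and s: "(\<Sum>j<r. i j) = a" by (auto simp: SS_def)
    have "(\<Sum>j<Suc r. (i(r := e - a)) j) = (\<Sum>j<r. i j) + (e - a)"
      by (simp add: sum.lessThan_Suc)
    also have "\<dots> = e" using s a by simp
    finally show "i(r := e - a) \<in> SS (Suc r) e"
      using ip a unfolding SS_def by (auto simp: PiE_iff extensional_def less_Suc_eq intro: order_trans)
  qed
  show "(\<lambda>x. (e - x r, x(r := undefined))) ` SS (Suc r) e \<subseteq> (SIGMA a:{0..e}. SS r a)"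
  proof clarify
    fix x assume x: "x \<in> SS (Suc r) e"
    hence xp: "x \<in> {..<Suc r} \<rightarrow>\<^sub>E {..e}" and s: "(\<Sum>j<Suc r. x j) = e" by (auto simp: SS_def)
    have s2: "(\<Sum>j<r. x j) = e - x r" using s by (simp add: sum.lessThan_Suc)
    have le: "x j \<le> e - x r" if "j < r" for j
    proof -
      have "x j \<le> (\<Sum>j<r. x j)" using that by (intro member_le_sum) auto
      thus ?thesis using s2 by simp
    qed
    have "(\<Sum>j<r. (x(r := undefined)) j) = e - x r" using s2 by simp
    moreover have "x(r := undefined) \<in> {..<r} \<rightarrow>\<^sub>E {..e - x r}"
      using xp le by (auto simp: PiE_iff extensional_def)
    ultimately show "e - x r \<in> {0..e} \<and> x(r := undefined) \<in> SS r (e - x r)"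
      by (auto simp: SS_def)
  qed
qed

lemma fps_prod_nth:
  fixes F :: "nat \<Rightarrow> 'a::comm_ring_1 fps"
  shows "(\<Prod>j<r. F j) $ e = (\<Sum>i\<in>SS r e. \<Prod>j<r. F j $ i j)"
proof (induction r arbitrary: e)
  case 0
  have "SS 0 e = (if e = 0 then {\<lambda>_. undefined} else {})"
    by (auto simp: SS_def PiE_def extensional_def)
  thus ?case by simp
next
  case (Suc r)
  have "(\<Prod>j<Suc r. F j) $ e = ((\<Prod>j<r. F j) * F r) $ e" by (simp add: prod.lessThan_Suc)
  also have "\<dots> = (\<Sum>a=0..e. (\<Sum>i\<in>SS r a. \<Prod>j<r. F j $ i j) * F r $ (e - a))"
    by (simp add: fps_mult_nth Suc.IH)
  also have "\<dots> = (\<Sum>a=0..e. \<Sum>i\<in>SS r a. (\<Prod>j<r. F j $ i j) * F r $ (e - a))"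
    by (simp add: sum_distrib_right)
  also have "\<dots> = (\<Sum>p\<in>(SIGMA a:{0..e}. SS r a). (\<Prod>j<r. F j $ snd p j) * F r $ (e - fst p))"
    by (subst sum.Sigma) (auto simp: SS_finite split_def)
  also have "\<dots> = (\<Sum>p\<in>(SIGMA a:{0..e}. SS r a). (\<lambda>x. \<Prod>j<Suc r. F j $ x j) ((\<lambda>(a, i). i(r := e - a)) p))"
    by (intro sum.cong refl) (auto simp: prod.lessThan_Suc intro!: prod.cong)
  also have "\<dots> = (\<Sum>x\<in>SS (Suc r) e. \<Prod>j<Suc r. F j $ x j)"
    by (rule sum.reindex_bij_betw[OF SS_bij])
  finally show ?case .
qed


lemma power_nth_zero_low:
  fixes f :: "'a::comm_ring_1 fps"
  assumes "f $ 0 = 0"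
  shows "j < m \<Longrightarrow> (f ^ m) $ j = 0"
proof (induction m arbitrary: j)
  case 0 thus ?case by simp
next
  case (Suc m)
  have "(f ^ Suc m) $ j = (\<Sum>i=0..j. f $ i * (f ^ m) $ (j - i))" by (simp add: fps_mult_nth)
  also have "\<dots> = 0"
  proof (intro sum.neutral ballI)
    fix i assume ij: "i \<in> {0..j}"
    show "f $ i * (f ^ m) $ (j - i) = 0"
    proof (cases "i = 0")
      case True thus ?thesis using assms by simp
    next
      case False
      hence "j - i < m" using Suc.prems ij by auto
      thus ?thesis using Suc.IH by simp
    qed
  qed
  finally show ?case .
qed

lemma neg_pow_fps: "(- u :: real fps) ^ k = fps_const ((-1) ^ k) * u ^ k"
proof (induction k)
  case 0 thus ?case by simp
next
  case (Suc k)
  have "(- u) ^ Suc k = - (u * (fps_const ((-1) ^ k) * u ^ k))" using Suc by simp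
  also have "\<dots> = fps_const (- ((-1) ^ k)) * (u * u ^ k)"
    by (simp add: mult_ac flip: fps_const_neg)
  finally show ?case by simp
qed

lemma inverse_series_nth:
  fixes P :: "real fps"
  assumes P0: "P $ 0 = 1" and n: "n \<ge> 1"
  shows "inverse P $ n = (\<Sum>k=1..n. (-1) ^ k * ((P - 1) ^ k) $ n)"
proof -
  define u where "u = P - 1"
  have u0: "u $ 0 = 0" using P0 by (simp add: u_def)
  define v where "v = (\<Sum>k<Suc n. (- u) ^ k)"
  define w where "w = (- u) ^ Suc n"
  have Pv: "P * v = 1 - w"
  proof -
    have e: "1 - (-u)^Suc n = (1 - (-u)) * v" unfolding v_def by (rule one_diff_power_eq)
    have hP: "1 - (- u) = P" by (simp add: u_def)
    show ?thesis unfolding w_def e hP by (rule refl)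
  qed
  have iP: "inverse P * P = 1" using P0 by (simp add: inverse_mult_eq_1)
  have "v = inverse P * (P * v)" using iP by (simp add: mult.assoc[symmetric])
  hence inv: "inverse P = v + inverse P * w" using Pv by (simp add: algebra_simps)
  have w0: "w $ j = 0" if "j \<le> n" for j
    unfolding w_def using that u0 by (intro power_nth_zero_low) auto
  have "(inverse P * w) $ n = 0"
    by (simp add: fps_mult_nth w0)
  hence "inverse P $ n = v $ n" by (subst inv) simp
  also have "\<dots> = (\<Sum>k<Suc n. (fps_const ((-1) ^ k) * u ^ k) $ n)"
    unfolding v_def fps_sum_nth
    by (intro sum.cong refl) (simp only: neg_pow_fps)
  also have "\<dots> = (\<Sum>k<Suc n. (-1) ^ k * (u ^ k) $ n)" by simp
  also have "\<dots> = (\<Sum>k\<in>insert 0 {1..n}. (-1) ^ k * (u ^ k) $ n)"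
    by (intro sum.cong) auto
  also have "\<dots> = (\<Sum>k=1..n. (-1) ^ k * (u ^ k) $ n)" using n by simp
  finally show ?thesis by (simp add: u_def)
qed


lemma M_coeff_eq: "M_coeff N r e = (Abs_fps (\<lambda>i. fact N / fact (N + i) :: real)) ^ r $ e"
proof -
  have "M_coeff N r e = (\<Sum>i\<in>SS r e. \<Prod>j<r. fact N / fact (N + i j))"
    unfolding M_coeff_def SS_def
    by (intro sum.cong refl) (simp add: prod_dividef)
  thus ?thesis using fps_prod_nth[of "\<lambda>_. Abs_fps (\<lambda>i. fact N / fact (N + i) :: real)" r e]
    by simp
qed

lemma gf_eq:
  assumes "N \<ge> 1"
  shows "hyp_bernoulli_gf N r = inverse ((Abs_fps (\<lambda>i. fact N / fact (N + i) :: real)) ^ r)"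
proof -
  define h where "h = Abs_fps (\<lambda>i. fact N / fact (N + i) :: real)"
  define A where "A = fps_const (1 / fact N :: real) * fps_X ^ N"
  define D where "D = fps_exp 1 - Abs_fps (\<lambda>n. if n < N then 1 / fact n else 0 :: real)"
  have h0: "h $ 0 = 1" by (simp add: h_def)
  have DA: "D = A * h"
  proof (rule fps_ext)
    fix m
    show "D $ m = (A * h) $ m"
    proof (cases "m < N")
      case True thus ?thesis
        by (simp add: D_def A_def fps_exp_def mult.assoc fps_X_power_mult_nth)
    next
      case False
      hence "N + (m - N) = m" by simp
      thus ?thesis using False
        by (simp add: D_def A_def h_def fps_exp_def mult.assoc fps_X_power_mult_nth)
    qed
  qed
  have D0: "D \<noteq> 0"
  proof
    assume "D = 0"
    hence "D $ N = 0" by simp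
    thus False by (simp add: D_def fps_exp_def)
  qed
  have ih: "inverse h * h = 1" using h0 by (simp add: inverse_mult_eq_1)
  have "inverse h * D = A * (inverse h * h)" using DA by (simp add: mult_ac)
  hence "inverse h * D = A" using ih by simp
  hence "A / D = (inverse h * D) / D" by simp
  also have "\<dots> = inverse h * (D / D)" by (rule fps_divide_times) simp
  also have "\<dots> = inverse h" using D0 by simp
  finally have "A / D = inverse h" .
  thus ?thesis unfolding hyp_bernoulli_gf_def
    by (simp add: A_def D_def h_def fps_inverse_power)
qed


theorem proposition7:
  fixes r N n :: nat
  assumes "r \<ge> 1" and "N \<ge> 1" and "n \<ge> 1"
  shows "hyp_bernoulli N r n =
    fact n * (\<Sum>k=1..n. (-1) ^ k *
      (\<Sum>e\<in>{e \<in> {..<k} \<rightarrow>\<^sub>E {1..n}. (\<Sum>j<k. e j) = n}.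
         (\<Prod>j<k. M_coeff N r (e j))))"
proof -
  define h where "h = Abs_fps (\<lambda>i. fact N / fact (N + i) :: real)"
  define P where "P = h ^ r"
  have P0: "P $ 0 = 1" unfolding P_def by (rule fps_power_zeroth_eq_one) (simp add: h_def)
  have PM: "(P - 1) $ m = M_coeff N r m" if "m \<ge> 1" for m
    using that by (simp add: P_def h_def M_coeff_eq)
  have P1z: "(P - 1) $ 0 = 0" using P0 by simp
  have key: "((P - 1) ^ k) $ n = (\<Sum>e\<in>{e \<in> {..<k} \<rightarrow>\<^sub>E {1..n}. (\<Sum>j<k. e j) = n}.
         (\<Prod>j<k. M_coeff N r (e j)))" for k
  proof -
    have "((P - 1) ^ k) $ n = (\<Prod>j<k. P - 1) $ n" by simp
    also have "\<dots> = (\<Sum>e\<in>SS k n. \<Prod>j<k. (P - 1) $ e j)" by (rule fps_prod_nth)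
    also have "\<dots> = (\<Sum>e\<in>{e \<in> {..<k} \<rightarrow>\<^sub>E {1..n}. (\<Sum>j<k. e j) = n}.
         (\<Prod>j<k. M_coeff N r (e j)))"
    proof (rule sum.mono_neutral_cong_right)
      show "finite (SS k n)" by (rule SS_finite)
      show "{e \<in> {..<k} \<rightarrow>\<^sub>E {1..n}. (\<Sum>j<k. e j) = n} \<subseteq> SS k n"
        unfolding SS_def by (auto simp: PiE_iff)
      show "\<forall>e\<in>SS k n - {e \<in> {..<k} \<rightarrow>\<^sub>E {1..n}. (\<Sum>j<k. e j) = n}. (\<Prod>j<k. (P - 1) $ e j) = 0"
      proof
        fix e assume e: "e \<in> SS k n - {e \<in> {..<k} \<rightarrow>\<^sub>E {1..n}. (\<Sum>j<k. e j) = n}"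
        then obtain j where jk: "j < k" "e j = 0" unfolding SS_def
          by (auto simp: PiE_iff)
        show "(\<Prod>j<k. (P - 1) $ e j) = 0"
          by (subst prod_zero_iff) (use jk P1z in \<open>auto intro!: bexI[of _ j]\<close>)
      qed
      fix e assume ee: "e \<in> {e \<in> {..<k} \<rightarrow>\<^sub>E {1..n}. (\<Sum>j<k. e j) = n}"
      have ge: "e j \<ge> 1" if "j < k" for j using that ee by (auto simp: PiE_iff)
      show "(\<Prod>j<k. (P - 1) $ e j) = (\<Prod>j<k. M_coeff N r (e j))"
        using ge by (intro prod.cong refl PM) auto
    qed
    finally show ?thesis .
  qed
  have "hyp_bernoulli N r n = fact n * inverse P $ n"
    unfolding hyp_bernoulli_def using gf_eq[OF assms(2)] by (simp add: P_def h_def)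
  also have "inverse P $ n = (\<Sum>k=1..n. (-1) ^ k * ((P - 1) ^ k) $ n)"
    by (rule inverse_series_nth[OF P0 assms(3)])
  finally show ?thesis by (simp add: key)
qed

end
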